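(* There exists an infinite symmetric matrix $M=\{m_{i,j}\}_{i,j\in \mathbf{N}}$ such that: (i) every entry $m_{i,j}$ equals $0$ or $1/4$; (ii) the support (set of indices of nonzero entries) of each row and of each column has cardinality $4$; (iii) $I-M$, acting as an operator on $\ell^2(\mathbf{N})$, is invertible on $\ell^2(\mathbf{N})$, but $I-M$, acting as an operator on $\ell^{\infty}(\mathbf{N})$, is not invertible on $\ell^{\infty}(\mathbf{N})$.
   Context: An infinite matrix $M=\{m_{i,j}\}_{i,j\in\mathbf{N}}$ acts on sequences by $(Mf)(i)=\sum_j m_{i,j}f(j)$; since each row and column has finitely many nonzero entries bounded by $1/4$, $M$ defines a bounded operator on $\ell^p(\mathbf{N})$ for every $1\le p\le\infty$. $I$ denotes the identity matrix/operator. *)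

theory Defs
  imports "HOL-Analysis.Analysis"
begin

text \<open>Infinite matrices indexed by nat, acting on real sequences. Every row of the
matrices considered has finite support, so the action is a finite sum.\<close>

definition mat_apply :: "(nat \<Rightarrow> nat \<Rightarrow> real) \<Rightarrow> (nat \<Rightarrow> real) \<Rightarrow> nat \<Rightarrow> real" where
  "mat_apply M f i = (\<Sum>j\<in>{j. M i j \<noteq> 0}. M i j * f j)"

definition id_minus :: "(nat \<Rightarrow> nat \<Rightarrow> real) \<Rightarrow> (nat \<Rightarrow> real) \<Rightarrow> nat \<Rightarrow> real" where
  "id_minus M f i = f i - mat_apply M f i"

definition l2 :: "(nat \<Rightarrow> real) set" where
  "l2 = {f. summable (\<lambda>i. (f i)\<^sup>2)}"

definition l2_norm :: "(nat \<Rightarrow> real) \<Rightarrow> real" where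
  "l2_norm f = sqrt (\<Sum>i. (f i)\<^sup>2)"

definition linf :: "(nat \<Rightarrow> real) set" where
  "linf = {f. \<exists>B. \<forall>i. \<bar>f i\<bar> \<le> B}"

definition linf_norm :: "(nat \<Rightarrow> real) \<Rightarrow> real" where
  "linf_norm f = (SUP i. \<bar>f i\<bar>)"

definition invertible_on :: "(nat \<Rightarrow> real) set \<Rightarrow> ((nat \<Rightarrow> real) \<Rightarrow> real)
    \<Rightarrow> ((nat \<Rightarrow> real) \<Rightarrow> (nat \<Rightarrow> real)) \<Rightarrow> bool" where
  "invertible_on X nX T \<longleftrightarrow>
     (\<forall>f\<in>X. T f \<in> X) \<and>
     (\<exists>S. (\<forall>f\<in>X. S f \<in> X) \<and> (\<exists>C. \<forall>f\<in>X. nX (S f) \<le> C * nX f) \<and>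
          (\<forall>f\<in>X. S (T f) = f) \<and> (\<forall>f\<in>X. T (S f) = f))"

end

theory Submission
  imports Defs
begin

definition Mx :: "nat \<Rightarrow> nat \<Rightarrow> real" where
  "Mx i j = (if j = (i-1) div 3 \<or> j = 3*i+1 \<or> j = 3*i+2 \<or> j = 3*i+3 then 1/4 else 0)"

definition Lop :: "(nat \<Rightarrow> real) \<Rightarrow> nat \<Rightarrow> real" where
  "Lop f i = (f ((i-1) div 3) + f (3*i+1) + f (3*i+2) + f (3*i+3)) / 4"

lemma divchar: "j = (i-1) div 3 \<longleftrightarrow> (i = 0 \<and> j = 0) \<or> i = 3*j+1 \<or> i = 3*j+2 \<or> i = 3*j+3"
  for i j :: nat
proof
  assume "j = (i-1) div 3"
  moreover have "i - 1 = 3 * ((i-1) div 3) + (i-1) mod 3" by simp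
  moreover have "(i-1) mod 3 < 3" by simp
  ultimately show "(i = 0 \<and> j = 0) \<or> i = 3*j+1 \<or> i = 3*j+2 \<or> i = 3*j+3" by (cases i) auto
next
  assume "(i = 0 \<and> j = 0) \<or> i = 3*j+1 \<or> i = 3*j+2 \<or> i = 3*j+3"
  then show "j = (i-1) div 3" by auto
qed
lemma adj_sym: "(j = (i-1) div 3 \<or> j = 3*i+1 \<or> j = 3*i+2 \<or> j = 3*i+3) \<longleftrightarrow>
   (i = (j-1) div 3 \<or> i = 3*j+1 \<or> i = 3*j+2 \<or> i = 3*j+3)"
  for i j :: nat unfolding divchar[of j i] divchar[of i j] by auto

lemma Mx_sym: "Mx i j = Mx j i"
  unfolding Mx_def adj_sym[of i j] ..

lemma supp: "{j. Mx i j \<noteq> 0} = {(i-1) div 3, 3*i+1, 3*i+2, 3*i+3}"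
  by (auto simp: Mx_def)

lemma supp_card: "card {j. Mx i j \<noteq> 0} = 4"
proof -
  have d: "(i-1) div 3 \<noteq> 3*i+1" "(i-1) div 3 \<noteq> 3*i+2" "(i-1) div 3 \<noteq> 3*i+3" for i::nat by (cases i; simp)+
  show ?thesis unfolding supp using d[of i] by simp
qed

lemma mat_apply_Mx: "mat_apply Mx f = Lop f"
proof
  fix i :: nat
  have d: "(i-1) div 3 \<noteq> 3*i+1" "(i-1) div 3 \<noteq> 3*i+2" "(i-1) div 3 \<noteq> 3*i+3" by (cases i; simp)+
  then show "mat_apply Mx f i = Lop f i"
    unfolding mat_apply_def supp Lop_def by (simp add: Mx_def field_simps)
qed

lemma cs4: "(a+b+c+d)^2 \<le> 5/2 * (a^2 + 2*(b^2+c^2+d^2))" for a b c d :: real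
proof -
  have "5/2 * (a^2 + 2*(b^2+c^2+d^2)) - (a+b+c+d)^2 = 3/2*(a-2*(b+c+d)/3)^2 + 5/3*((b-c)^2+(b-d)^2+(c-d)^2)"
    by (simp add: power2_eq_square field_simps)
  moreover have "0 \<le> 3/2*(a-2*(b+c+d)/3)^2 + 5/3*((b-c)^2+(b-d)^2+(c-d)^2)" by simp
  ultimately show ?thesis by linarith
qed

lemma row_bound: "(Lop f n)^2 \<le> 5/32 * ((f ((n-1) div 3))^2 + 2*((f (3*n+1))^2 + (f (3*n+2))^2 + (f (3*n+3))^2))"
proof -
  have "(Lop f n)^2 = (f ((n-1) div 3) + f (3*n+1) + f (3*n+2) + f (3*n+3))^2 / 16"
    by (simp add: Lop_def power_divide)
  with cs4[of "f ((n-1) div 3)" "f (3*n+1)" "f (3*n+2)" "f (3*n+3)"] show ?thesis by simp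
qed

lemma sum_u: "(\<Sum>n<3*N+1. g ((n-1) div 3)) = g 0 + 3 * (\<Sum>m<N. g m)" for g :: "nat \<Rightarrow> real"
proof (induction N)
  case 0 then show ?case by simp
next
  case (Suc N)
  have e: "3 * Suc N + 1 = Suc (Suc (Suc (3*N+1)))" by simp
  have a: "(3*N+1-1) div 3 = N" "(Suc (3*N+1)-1) div 3 = N" "(Suc (Suc (3*N+1))-1) div 3 = N" by simp_all
  have "(\<Sum>n<3*Suc N+1. g ((n-1) div 3)) = (\<Sum>n<3*N+1. g ((n-1) div 3)) + g N + g N + g N"
    unfolding e by (simp only: sum.lessThan_Suc a)
  then show ?case using Suc.IH by simp
qed

lemma sum_c: "(\<Sum>n<N. g (3*n+1) + g (3*n+2) + g (3*n+3)) = (\<Sum>j<3*N+1. g j) - g 0" for g :: "nat \<Rightarrow> real"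
proof (induction N)
  case 0 then show ?case by simp
next
  case (Suc N)
  have e: "3 * Suc N + 1 = Suc (Suc (Suc (3*N+1)))" by simp
  have s3: "\<And>K. (\<Sum>j<K+3. g j) = (\<Sum>j<K. g j) + g K + g (K+1) + g (K+2)"
    by (simp add: numeral_3_eq_3)
  have "(\<Sum>n<Suc N. g (3*n+1) + g (3*n+2) + g (3*n+3)) = (\<Sum>n<N. g (3*n+1) + g (3*n+2) + g (3*n+3)) + (g (3*N+1) + g (3*N+2) + g (3*N+3))"
    by (rule sum.lessThan_Suc)
  also have "\<dots> = (\<Sum>j<3*Suc N+1. g j) - g 0"
  proof -
    have "3*Suc N+1 = (3*N+1)+3" by simp
    then have F: "(\<Sum>j<3*Suc N+1. g j) = (\<Sum>j<3*N+1. g j) + g (3*N+1) + g (3*N+1+1) + g (3*N+1+2)" by (simp only: s3)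
    have H: "g (3*N+1+1) = g (3*N+2)" "g (3*N+1+2) = g (3*N+3)"
      by simp (use arg_cong[of "3*N+1+2" "3*N+3" g] in simp)
    show ?thesis unfolding F H Suc.IH by (simp only: algebra_simps)
  qed
  finally show ?case .
qed


lemma summ_bound:
  fixes a :: "nat \<Rightarrow> real"
  assumes "\<And>n. 0 \<le> a n" "\<And>n. (\<Sum>k<n. a k) \<le> B"
  shows "summable a" "suminf a \<le> B"
proof -
  show "summable a"
    by (rule bounded_imp_summable[of a B], rule assms(1), subst lessThan_Suc_atMost[symmetric], rule assms(2))
  then show "suminf a \<le> B" using suminf_le_const assms(2) by blast
qed

lemma term_le_suminf:
  fixes g :: "nat \<Rightarrow> real"
  assumes "summable g" "\<And>n. 0 \<le> g n"
  shows "g i \<le> suminf g"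
  using sum_le_suminf[OF assms(1), of "{i}"] assms(2) by simp

lemma sum_lin: "(\<Sum>n\<in>I. c * (A n + 2 * B n)) = c * ((\<Sum>n\<in>I. A n) + 2 * (\<Sum>n\<in>I. B n))"
  for A B :: "nat \<Rightarrow> real"
  by (simp add: distrib_left sum_distrib_left sum.distrib mult.assoc mult.left_commute)

lemma lin5: "X \<le> S \<Longrightarrow> Y \<le> S \<Longrightarrow> 0 \<le> a \<Longrightarrow> 5/32*(a + 3*X + 2*(Y - a)) \<le> 5/32*(5*S)"
  for a X Y S :: real by (simp add: algebra_simps)

lemma Lop_l2:
  assumes f: "f \<in> l2"
  shows "Lop f \<in> l2" "(\<Sum>i. (Lop f i)\<^sup>2) \<le> 25/32 * (\<Sum>i. (f i)\<^sup>2)"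
proof -
  define g where "g i = (f i)\<^sup>2" for i
  define S where "S = suminf g"
  have sg: "summable g" using f unfolding l2_def g_def by simp
  have g0: "0 \<le> g i" for i unfolding g_def by simp
  have gS: "(\<Sum>i<n. g i) \<le> S" for n unfolding S_def by (rule sum_le_suminf[OF sg]) (simp_all add: g0)
  have b: "(\<Sum>n<K. (Lop f n)\<^sup>2) \<le> 25/32 * S" for K
  proof -
    have "(\<Sum>n<K. (Lop f n)\<^sup>2) \<le> (\<Sum>n<3*K+1. (Lop f n)\<^sup>2)"
      by (rule sum_mono2) auto
    also have "\<dots> \<le> (\<Sum>n<3*K+1. 5/32 * (g ((n-1) div 3) + 2*(g (3*n+1) + g (3*n+2) + g (3*n+3))))"
      by (rule sum_mono) (unfold g_def, rule row_bound)
    also have "\<dots> = 5/32 * ((\<Sum>n<3*K+1. g ((n-1) div 3)) + 2*(\<Sum>n<3*K+1. g (3*n+1) + g (3*n+2) + g (3*n+3)))"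
      by (rule sum_lin)
    also have "\<dots> = 5/32 * (g 0 + 3 * (\<Sum>m<K. g m) + 2*((\<Sum>j<3*(3*K+1)+1. g j) - g 0))"
      by (simp only: sum_u sum_c)
    also have "\<dots> \<le> 5/32 * (5 * S)"
      by (rule lin5[OF gS[of K] gS[of "3*(3*K+1)+1"] g0[of 0]])
    finally show ?thesis by simp
  qed
  have "summable (\<lambda>i. (Lop f i)\<^sup>2)" "(\<Sum>i. (Lop f i)\<^sup>2) \<le> 25/32 * S"
    by (rule summ_bound[OF _ b], simp)+
  then show "Lop f \<in> l2" "(\<Sum>i. (Lop f i)\<^sup>2) \<le> 25/32 * (\<Sum>i. (f i)\<^sup>2)"
    unfolding l2_def S_def g_def by auto
qed

lemma P_l2:
  assumes f: "f \<in> l2"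
  shows "(Lop ^^ k) f \<in> l2 \<and> (\<Sum>i. ((Lop ^^ k) f i)\<^sup>2) \<le> (25/32)^k * (\<Sum>i. (f i)\<^sup>2)"
proof (induction k)
  case 0 then show ?case using f by simp
next
  case (Suc k)
  then have "(Lop ^^ Suc k) f \<in> l2" using Lop_l2 by simp
  moreover have "(\<Sum>i. ((Lop ^^ Suc k) f i)\<^sup>2) \<le> 25/32 * (\<Sum>i. ((Lop ^^ k) f i)\<^sup>2)"
    using Lop_l2(2)[of "(Lop ^^ k) f"] Suc by simp
  moreover have "25/32 * (\<Sum>i. ((Lop ^^ k) f i)\<^sup>2) \<le> 25/32 * ((25/32)^k * (\<Sum>i. (f i)\<^sup>2))"
    using Suc by simp
  ultimately show ?case by (simp add: mult.assoc)
qed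

definition rr :: real where "rr = sqrt (25/32)"

lemma rr: "0 \<le> rr" "rr < 1"
  unfolding rr_def by simp_all

lemma l2_sum_nonneg: "f \<in> l2 \<Longrightarrow> 0 \<le> (\<Sum>i. (f i)\<^sup>2)"
  unfolding l2_def by (simp add: suminf_nonneg)

lemma l2_norm_nonneg: "f \<in> l2 \<Longrightarrow> 0 \<le> l2_norm f"
  unfolding l2_norm_def using l2_sum_nonneg by simp

lemma P_pt:
  assumes f: "f \<in> l2"
  shows "\<bar>(Lop ^^ k) f i\<bar> \<le> rr^k * l2_norm f"
proof -
  have pk: "(Lop ^^ k) f \<in> l2" and bk: "(\<Sum>i. ((Lop ^^ k) f i)\<^sup>2) \<le> (25/32)^k * (\<Sum>i. (f i)\<^sup>2)"
    using P_l2[OF f] by auto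
  have "((Lop ^^ k) f i)\<^sup>2 \<le> (\<Sum>i. ((Lop ^^ k) f i)\<^sup>2)"
    by (rule term_le_suminf) (use pk in \<open>simp_all add: l2_def\<close>)
  also note bk
  finally have "sqrt (((Lop ^^ k) f i)\<^sup>2) \<le> sqrt ((25/32)^k * (\<Sum>i. (f i)\<^sup>2))"
    by (rule real_sqrt_le_mono)
  moreover have "sqrt (((Lop ^^ k) f i)\<^sup>2) = \<bar>(Lop ^^ k) f i\<bar>" by (rule real_sqrt_abs)
  moreover have "sqrt ((25/32)^k * (\<Sum>i. (f i)\<^sup>2)) = rr^k * l2_norm f"
    by (simp only: real_sqrt_mult real_sqrt_power rr_def l2_norm_def)
  ultimately show ?thesis by simp
qed

lemma P_summable:
  assumes f: "f \<in> l2"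
  shows "summable (\<lambda>k. (Lop ^^ k) f i)"
proof (rule summable_comparison_test')
  show "summable (\<lambda>k. rr^k * l2_norm f)"
    by (rule summable_mult2, rule summable_geometric) (use rr in simp)
  show "norm ((Lop ^^ k) f i) \<le> rr^k * l2_norm f" for k using P_pt[OF f] by simp
qed

lemma P_zero:
  assumes f: "f \<in> l2"
  shows "(\<lambda>k. (Lop ^^ k) f i) \<longlonglongrightarrow> 0"
proof (rule Lim_null_comparison)
  show "\<forall>\<^sub>F k in sequentially. norm ((Lop ^^ k) f i) \<le> rr^k * l2_norm f" using P_pt[OF f] by simp
  show "(\<lambda>k. rr^k * l2_norm f) \<longlonglongrightarrow> 0"
    by (rule tendsto_mult_left_zero, rule LIMSEQ_power_zero) (use rr in simp)
qed

lemma Lop_diff: "Lop (\<lambda>i. f i - g i) = (\<lambda>i. Lop f i - Lop g i)"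
  by (rule ext) (simp add: Lop_def field_simps)

lemma P_diff: "(Lop ^^ k) (\<lambda>i. f i - g i) = (\<lambda>i. (Lop ^^ k) f i - (Lop ^^ k) g i)"
  by (induction k) (simp_all add: Lop_diff)


definition Sop :: "(nat \<Rightarrow> real) \<Rightarrow> nat \<Rightarrow> real" where
  "Sop f i = (\<Sum>k. (Lop ^^ k) f i)"

lemma Tm: "id_minus Mx f = (\<lambda>i. f i - Lop f i)"
  unfolding id_minus_def mat_apply_Mx by simp

lemma l2_diff:
  assumes "f \<in> l2" "g \<in> l2" shows "(\<lambda>i. f i - g i) \<in> l2"
proof -
  have "summable (\<lambda>i. 2 * (f i)\<^sup>2 + 2 * (g i)\<^sup>2)"
    using assms unfolding l2_def by (intro summable_add summable_mult) auto
  moreover have "norm ((f i - g i)\<^sup>2) \<le> 2 * (f i)\<^sup>2 + 2 * (g i)\<^sup>2" for i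
  proof -
    have "0 \<le> (f i + g i)\<^sup>2" by simp
    then have "(f i - g i)\<^sup>2 \<le> 2 * (f i)\<^sup>2 + 2 * (g i)\<^sup>2" by (simp add: power2_eq_square algebra_simps)
    then show ?thesis by simp
  qed
  ultimately show ?thesis unfolding l2_def by (auto intro: summable_comparison_test')
qed

lemma S_T:
  assumes f: "f \<in> l2"
  shows "Sop (\<lambda>i. f i - Lop f i) = f"
proof
  fix i
  have e: "(Lop ^^ k) (\<lambda>i. f i - Lop f i) i = - ((Lop ^^ Suc k) f i - (Lop ^^ k) f i)" for k
    by (simp add: P_diff funpow_swap1)
  have "(\<lambda>k. (Lop ^^ Suc k) f i - (Lop ^^ k) f i) sums (0 - (Lop ^^ 0) f i)"
    by (rule telescope_sums, rule P_zero[OF f])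
  then have "(\<lambda>k. - ((Lop ^^ Suc k) f i - (Lop ^^ k) f i)) sums (- (0 - (Lop ^^ 0) f i))"
    by (rule sums_minus)
  then have "(\<lambda>k. (Lop ^^ k) (\<lambda>i. f i - Lop f i) i) sums f i" unfolding e by simp
  then show "Sop (\<lambda>i. f i - Lop f i) i = f i" unfolding Sop_def by (rule sums_unique[symmetric])
qed

lemma T_S:
  assumes f: "f \<in> l2"
  shows "(\<lambda>i. Sop f i - Lop (Sop f) i) = f"
proof
  fix i
  have s: "(\<lambda>k. (Lop ^^ k) f j) sums Sop f j" for j
    unfolding Sop_def by (rule summable_sums, rule P_summable[OF f])
  have "(\<lambda>k. ((Lop ^^ k) f ((i-1) div 3) + (Lop ^^ k) f (3*i+1) + (Lop ^^ k) f (3*i+2) + (Lop ^^ k) f (3*i+3)) / 4)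
     sums ((Sop f ((i-1) div 3) + Sop f (3*i+1) + Sop f (3*i+2) + Sop f (3*i+3)) / 4)"
    by (intro sums_divide sums_add s)
  then have "(\<lambda>k. (Lop ^^ Suc k) f i) sums Lop (Sop f) i"
    by (simp add: Lop_def)
  then have "(\<lambda>k. (Lop ^^ k) f i) sums (Lop (Sop f) i + (Lop ^^ 0) f i)"
    using sums_Suc_iff[of "\<lambda>k. (Lop ^^ k) f i" "Lop (Sop f) i"] by simp
  then have "Sop f i = Lop (Sop f) i + f i" using s[of i] sums_unique2 by fastforce
  then show "Sop f i - Lop (Sop f) i = f i" by simp
qed

lemma L2_partial:
  "L2_set (\<lambda>i. \<Sum>k<K. (Lop ^^ k) f i) A \<le> (\<Sum>k<K. L2_set ((Lop ^^ k) f) A)"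
proof (induction K)
  case 0 then show ?case by (simp add: L2_set_def)
next
  case (Suc K)
  have "L2_set (\<lambda>i. \<Sum>k<Suc K. (Lop ^^ k) f i) A
      = L2_set (\<lambda>i. (\<Sum>k<K. (Lop ^^ k) f i) + (Lop ^^ K) f i) A" by simp
  also have "\<dots> \<le> L2_set (\<lambda>i. \<Sum>k<K. (Lop ^^ k) f i) A + L2_set ((Lop ^^ K) f) A"
    by (rule L2_set_triangle_ineq)
  also have "\<dots> \<le> (\<Sum>k<Suc K. L2_set ((Lop ^^ k) f) A)" using Suc by simp
  finally show ?case .
qed

lemma S_l2:
  assumes f: "f \<in> l2"
  shows "Sop f \<in> l2" "l2_norm (Sop f) \<le> (1 / (1 - rr)) * l2_norm f"
proof -
  define B where "B = (1 / (1 - rr)) * l2_norm f"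
  have B0: "0 \<le> B" unfolding B_def using rr l2_norm_nonneg[OF f] by simp
  have Lk: "L2_set ((Lop ^^ k) f) {..<N} \<le> rr^k * l2_norm f" for k N
  proof -
    have pk: "(Lop ^^ k) f \<in> l2" and bk: "(\<Sum>i. ((Lop ^^ k) f i)\<^sup>2) \<le> (25/32)^k * (\<Sum>i. (f i)\<^sup>2)"
      using P_l2[OF f] by auto
    have "(\<Sum>i<N. ((Lop ^^ k) f i)\<^sup>2) \<le> (\<Sum>i. ((Lop ^^ k) f i)\<^sup>2)"
      by (rule sum_le_suminf) (use pk in \<open>simp_all add: l2_def\<close>)
    also note bk
    finally have "sqrt (\<Sum>i<N. ((Lop ^^ k) f i)\<^sup>2) \<le> sqrt ((25/32)^k * (\<Sum>i. (f i)\<^sup>2))"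
      by (rule real_sqrt_le_mono)
    moreover have "sqrt ((25/32)^k * (\<Sum>i. (f i)\<^sup>2)) = rr^k * l2_norm f"
      by (simp only: real_sqrt_mult real_sqrt_power rr_def l2_norm_def)
    ultimately show ?thesis unfolding L2_set_def by simp
  qed
  have geo: "(\<Sum>k<K. rr^k * l2_norm f) \<le> B" for K
  proof -
    have "(\<Sum>k<K. rr^k * l2_norm f) \<le> (\<Sum>k. rr^k * l2_norm f)"
      by (rule sum_le_suminf) (use rr l2_norm_nonneg[OF f] in \<open>simp_all add: summable_mult2 summable_geometric\<close>)
    also have "\<dots> = B" unfolding B_def using rr by (simp add: suminf_mult2[symmetric] suminf_geometric)
    finally show ?thesis .
  qed
  have partN: "(\<Sum>i<N. (Sop f i)\<^sup>2) \<le> B\<^sup>2" for N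
  proof -
    have lim: "(\<lambda>K. \<Sum>i<N. (\<Sum>k<K. (Lop ^^ k) f i)\<^sup>2) \<longlonglongrightarrow> (\<Sum>i<N. (Sop f i)\<^sup>2)"
      unfolding Sop_def by (intro tendsto_sum tendsto_power summable_LIMSEQ P_summable[OF f])
    have "(\<Sum>i<N. (\<Sum>k<K. (Lop ^^ k) f i)\<^sup>2) \<le> B\<^sup>2" for K
    proof -
      have "L2_set (\<lambda>i. \<Sum>k<K. (Lop ^^ k) f i) {..<N} \<le> B"
        using L2_partial[where K=K and f=f and A="{..<N}"] sum_mono[of "{..<K}" "\<lambda>k. L2_set ((Lop ^^ k) f) {..<N}" "\<lambda>k. rr^k * l2_norm f"] Lk geo[of K]
        by (meson order_trans)
      then have "(sqrt (\<Sum>i<N. (\<Sum>k<K. (Lop ^^ k) f i)\<^sup>2))\<^sup>2 \<le> B\<^sup>2"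
        unfolding L2_set_def by (intro power_mono) (simp_all add: sum_nonneg)
      moreover have "(sqrt (\<Sum>i<N. (\<Sum>k<K. (Lop ^^ k) f i)\<^sup>2))\<^sup>2 = (\<Sum>i<N. (\<Sum>k<K. (Lop ^^ k) f i)\<^sup>2)"
        by (rule real_sqrt_pow2) (simp add: sum_nonneg)
      ultimately show ?thesis by simp
    qed
    then show ?thesis using LIMSEQ_le_const2[OF lim] by blast
  qed
  have sm: "summable (\<lambda>i. (Sop f i)\<^sup>2)" "(\<Sum>i. (Sop f i)\<^sup>2) \<le> B\<^sup>2"
    by (rule summ_bound[OF _ partN], simp)+
  then show "Sop f \<in> l2" unfolding l2_def by simp
  have "l2_norm (Sop f) \<le> sqrt (B\<^sup>2)" unfolding l2_norm_def using sm(2) by (rule real_sqrt_le_mono)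
  also have "sqrt (B\<^sup>2) = B" using B0 by simp
  finally show "l2_norm (Sop f) \<le> (1 / (1 - rr)) * l2_norm f" unfolding B_def .
qed

theorem mainTheorem1:
  shows "\<exists>M :: nat \<Rightarrow> nat \<Rightarrow> real.
     (\<forall>i j. M i j = M j i) \<and>
     (\<forall>i j. M i j = 0 \<or> M i j = 1/4) \<and>
     (\<forall>i. card {j. M i j \<noteq> 0} = 4) \<and>
     (\<forall>j. card {i. M i j \<noteq> 0} = 4) \<and>
     invertible_on l2 l2_norm (id_minus M) \<and>
     \<not> invertible_on linf linf_norm (id_minus M)"
proof (intro exI[of _ Mx] conjI allI)
  show "Mx i j = Mx j i" for i j by (rule Mx_sym)
  show "Mx i j = 0 \<or> Mx i j = 1/4" for i j by (simp add: Mx_def)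
  show "card {j. Mx i j \<noteq> 0} = 4" for i by (rule supp_card)
  show "card {i. Mx i j \<noteq> 0} = 4" for j using supp_card[of j] by (simp add: Mx_sym)
  show "invertible_on l2 l2_norm (id_minus Mx)"
    unfolding invertible_on_def Tm
  proof (intro conjI ballI exI[of _ Sop])
    show "(\<lambda>i. f i - Lop f i) \<in> l2" if "f \<in> l2" for f
      using that Lop_l2(1)[OF that] by (rule l2_diff)
    show "Sop f \<in> l2" if "f \<in> l2" for f using S_l2(1)[OF that] .
    show "\<exists>C. \<forall>f\<in>l2. l2_norm (Sop f) \<le> C * l2_norm f"
      using S_l2(2) by blast
    show "Sop (\<lambda>i. f i - Lop f i) = f" if "f \<in> l2" for f using S_T[OF that] .
    show "(\<lambda>i. Sop f i - Lop (Sop f) i) = f" if "f \<in> l2" for f using T_S[OF that] .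
  qed
  show "\<not> invertible_on linf linf_norm (id_minus Mx)"
  proof
    assume "invertible_on linf linf_norm (id_minus Mx)"
    then obtain S where S: "\<forall>f\<in>linf. S (id_minus Mx f) = f"
      unfolding invertible_on_def by blast
    have c: "id_minus Mx (\<lambda>_. c) = (\<lambda>_. 0)" for c
      unfolding Tm Lop_def by simp
    have "(\<lambda>_. 1::real) \<in> linf" "(\<lambda>_. 0::real) \<in> linf" unfolding linf_def by auto
    then have "S (\<lambda>_. 0) = (\<lambda>_. 1::real)" "S (\<lambda>_. 0) = (\<lambda>_. 0::real)"
      using S c by metis+
    then show False by (metis zero_neq_one)
  qed
qed

end
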